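(* Let $X=\{1,\dots,n\}$, $Y$ finite, $Q$ a symmetric irreducible stochastic matrix on $Y$ (notation in context). Let $0\le k\le h\le n-1$ and let $\underline a=(a_0,\dots,a_m)$ be a type with $a_0+\cdots+a_m=h+1$ and $\ell(\underline a)\le k$; put $\underline a'=(a_0-1,a_1,\dots,a_m)$. Then every $F\in P_{h,\underline a',k}$ satisfies $$D_{h+1,\underline a}D^*_{h+1,\underline a}F=|Y|\,(n+\ell(\underline a)-k-h)(h-k+1)\,F.$$
   Context: $Q$ acts on $L(Y)$ by $(Qf)(y)=\sum_{y'}q(y,y')f(y')$, with distinct eigenvalues $\lambda_0=1,\dots,\lambda_m$ and eigenspaces $W_0$ (constants), $W_1,\dots,W_m$. For $0\le k\le n$, $\Theta_k$ is the set of functions $\theta$ with $\mathrm{dom}(\theta)$ a $k$-subset of $X$ and values in $Y$ ($\Theta_0$ consists of the empty function); $\varphi\subseteq\theta$ means $\mathrm{dom}\varphi\subseteq\mathrm{dom}\theta$ and $\theta|_{\mathrm{dom}\varphi}=\varphi$. For $1\le k\le n$: $D_k:L(\Theta_k)\to L(\Theta_{k-1})$, $(D_kF)(\varphi)=\sum_{\theta\in\Theta_k:\theta\supseteq\varphi}F(\theta)$, and $D_k^*:L(\Theta_{k-1})\to L(\Theta_k)$, $(D_k^*F)(\theta)=\sum_{\varphi\subseteq\theta}F(\varphi)$; $D_0:=0$. Types $\underline b=(b_0,\dots,b_m)$ of nonnegative integers, $|\underline b|=\sum b_i$, $\ell(\underline b)=b_1+\cdots+b_m$, $\underline b'=(b_0-1,b_1,\dots,b_m)$.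 A fundamental function of type $\underline b$ on a set $A$ with $|A|=|\underline b|$ is $F=\bigotimes_{j\in A}F^j$ ($F(\theta)=\prod_{j\in A}F^j(\theta(j))$ on $Y^A$, $0$ elsewhere) with each $F^j$ in some $W_{i_j}$ and exactly $b_i$ indices with $i_j=i$; $P_{k,\underline b,A}$ is their span and $P_{k,\underline b}=\bigoplus_{|A|=k}P_{k,\underline b,A}$ (so $P_{0,(0,\dots,0)}=L(\Theta_0)$; $\{0\}$ if an entry is negative). $D_{k,\underline b}$ is $D_k$ restricted to $P_{k,\underline b}$ and $D^*_{k,\underline b}$ is $D^*_k$ restricted to $P_{k-1,\underline b'}$. Spaces $P_{h,\underline b,k}$: for a type $\underline b$ with $|\underline b|=k$, $P_{k,\underline b,k}=\ker D_{k,\underline b}$; for $k<h\le n$ and $|\underline b|=h$ with $\ell(\underline b)\le k$, $P_{h,\underline b,k}=D^*_{h,\underline b}(P_{h-1,\underline b',k})$. *)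

theory Defs
  imports Complex_Main
begin

text \<open>The state space Y is the finite type 'y (Y = UNIV); the matrix Q is q :: 'y => 'y => real.\<close>

definition Qop :: "('y::finite \<Rightarrow> 'y \<Rightarrow> real) \<Rightarrow> ('y \<Rightarrow> real) \<Rightarrow> ('y \<Rightarrow> real)" where
  "Qop q f = (\<lambda>y. \<Sum>y'\<in>UNIV. q y y' * f y')"

definition symmetric_matrix :: "('y \<Rightarrow> 'y \<Rightarrow> real) \<Rightarrow> bool" where
  "symmetric_matrix q \<longleftrightarrow> (\<forall>y y'. q y y' = q y' y)"

definition stochastic_matrix :: "('y::finite \<Rightarrow> 'y \<Rightarrow> real) \<Rightarrow> bool" where
  "stochastic_matrix q \<longleftrightarrow> (\<forall>y y'. 0 \<le> q y y') \<and> (\<forall>y. (\<Sum>y'\<in>UNIV. q y y') = 1)"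

definition irreducible_matrix :: "('y \<Rightarrow> 'y \<Rightarrow> real) \<Rightarrow> bool" where
  "irreducible_matrix q \<longleftrightarrow> (\<forall>y y'. (y, y') \<in> {(a, b). 0 < q a b}\<^sup>*)"

definition is_eigenvalue :: "('y::finite \<Rightarrow> 'y \<Rightarrow> real) \<Rightarrow> real \<Rightarrow> bool" where
  "is_eigenvalue q \<mu> \<longleftrightarrow> (\<exists>f. f \<noteq> (\<lambda>_. 0) \<and> Qop q f = (\<lambda>y. \<mu> * f y))"

definition eigenspace :: "('y::finite \<Rightarrow> 'y \<Rightarrow> real) \<Rightarrow> real \<Rightarrow> ('y \<Rightarrow> real) set" where
  "eigenspace q \<mu> = {f. Qop q f = (\<lambda>y. \<mu> * f y)}"

definition Theta :: "nat \<Rightarrow> nat \<Rightarrow> (nat \<rightharpoonup> 'y) set" where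
  "Theta n k = {\<theta>. dom \<theta> \<subseteq> {1..n} \<and> card (dom \<theta>) = k}"

text \<open>D_k : L(Theta_k) -> L(Theta_(k-1)), with D_0 = 0; functions are extended by 0 outside Theta.\<close>
definition Dop :: "nat \<Rightarrow> nat \<Rightarrow> ((nat \<rightharpoonup> 'y) \<Rightarrow> real) \<Rightarrow> ((nat \<rightharpoonup> 'y) \<Rightarrow> real)" where
  "Dop n k F = (\<lambda>\<phi>. if k = 0 then 0
      else if \<phi> \<in> Theta n (k - 1) then (\<Sum>\<theta>\<in>{\<theta>\<in>Theta n k. \<phi> \<subseteq>\<^sub>m \<theta>}. F \<theta>) else 0)"

definition Dstar :: "nat \<Rightarrow> nat \<Rightarrow> ((nat \<rightharpoonup> 'y) \<Rightarrow> real) \<Rightarrow> ((nat \<rightharpoonup> 'y) \<Rightarrow> real)" where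
  "Dstar n k F = (\<lambda>\<theta>. if \<theta> \<in> Theta n k then (\<Sum>\<phi>\<in>{\<phi>\<in>Theta n (k - 1). \<phi> \<subseteq>\<^sub>m \<theta>}. F \<phi>) else 0)"

text \<open>A type (b_0,...,b_m) is represented by b :: nat => nat, only entries 0..m matter.\<close>

definition type_size :: "nat \<Rightarrow> (nat \<Rightarrow> nat) \<Rightarrow> nat" where
  "type_size m b = (\<Sum>i\<in>{0..m}. b i)"

definition type_ell :: "nat \<Rightarrow> (nat \<Rightarrow> nat) \<Rightarrow> nat" where
  "type_ell m b = (\<Sum>i\<in>{1..m}. b i)"

text \<open>b' = (b_0 - 1, b_1, ..., b_m); only used when b_0 \<ge> 1.\<close>
definition type_prime :: "(nat \<Rightarrow> nat) \<Rightarrow> (nat \<Rightarrow> nat)" where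
  "type_prime b = b(0 := b 0 - 1)"

definition fspan :: "('a \<Rightarrow> real) set \<Rightarrow> ('a \<Rightarrow> real) set" where
  "fspan G = {f. \<exists>S c. finite S \<and> S \<subseteq> G \<and> f = (\<lambda>x. \<Sum>g\<in>S. c g * g x)}"

text \<open>Fundamental functions of type b on the set A \<subseteq> X, with eigenspaces W_i = eigenspace q (lam i).\<close>
definition fundamental ::
  "nat \<Rightarrow> ('y::finite \<Rightarrow> 'y \<Rightarrow> real) \<Rightarrow> nat \<Rightarrow> (nat \<Rightarrow> real) \<Rightarrow> (nat \<Rightarrow> nat) \<Rightarrow> nat set
    \<Rightarrow> ((nat \<rightharpoonup> 'y) \<Rightarrow> real) \<Rightarrow> bool" where
  "fundamental n q m lam b A F \<longleftrightarrow>
     A \<subseteq> {1..n} \<and> card A = type_size m b \<and>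
     (\<exists>(Fj :: nat \<Rightarrow> 'y \<Rightarrow> real) (ij :: nat \<Rightarrow> nat).
        (\<forall>j\<in>A. ij j \<le> m \<and> Fj j \<in> eigenspace q (lam (ij j))) \<and>
        (\<forall>i\<le>m. card {j\<in>A. ij j = i} = b i) \<and>
        F = (\<lambda>\<theta>. if dom \<theta> = A then (\<Prod>j\<in>A. Fj j (the (\<theta> j))) else 0))"

definition P_kbA ::
  "nat \<Rightarrow> ('y::finite \<Rightarrow> 'y \<Rightarrow> real) \<Rightarrow> nat \<Rightarrow> (nat \<Rightarrow> real) \<Rightarrow> nat \<Rightarrow> (nat \<Rightarrow> nat) \<Rightarrow> nat set
    \<Rightarrow> ((nat \<rightharpoonup> 'y) \<Rightarrow> real) set" where
  "P_kbA n q m lam k b A = fspan {F. card A = k \<and> fundamental n q m lam b A F}"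

definition P_kb ::
  "nat \<Rightarrow> ('y::finite \<Rightarrow> 'y \<Rightarrow> real) \<Rightarrow> nat \<Rightarrow> (nat \<Rightarrow> real) \<Rightarrow> nat \<Rightarrow> (nat \<Rightarrow> nat)
    \<Rightarrow> ((nat \<rightharpoonup> 'y) \<Rightarrow> real) set" where
  "P_kb n q m lam k b = fspan (\<Union>A\<in>{A. A \<subseteq> {1..n} \<and> card A = k}. P_kbA n q m lam k b A)"

text \<open>P_{h,b,k}: for h = k (and |b| = k) the kernel of D_{k,b}; for k < h (|b| = h, ell(b) \<le> k)
  the image D^*_{h,b}(P_{h-1,b',k}). Outside these cases the value is irrelevant (set to {0}).\<close>
fun P_hbk ::
  "nat \<Rightarrow> ('y::finite \<Rightarrow> 'y \<Rightarrow> real) \<Rightarrow> nat \<Rightarrow> (nat \<Rightarrow> real) \<Rightarrow> nat \<Rightarrow> (nat \<Rightarrow> nat) \<Rightarrow> nat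
    \<Rightarrow> ((nat \<rightharpoonup> 'y) \<Rightarrow> real) set" where
  "P_hbk n q m lam 0 b k =
     (if k = 0 \<and> type_size m b = 0
      then {F\<in>P_kb n q m lam 0 b. Dop n 0 F = (\<lambda>_. 0)} else {\<lambda>_. 0})"
| "P_hbk n q m lam (Suc h) b k =
     (if k = Suc h \<and> type_size m b = k
      then {F\<in>P_kb n q m lam k b. Dop n k F = (\<lambda>_. 0)}
      else if k < Suc h \<and> type_size m b = Suc h \<and> type_ell m b \<le> k
      then Dstar n (Suc h) ` P_hbk n q m lam h (type_prime b) k
      else {\<lambda>_. 0})"

end

theory Submission imports Defs begin

definition Msum :: "((nat \<rightharpoonup> 'y::finite) \<Rightarrow> real) \<Rightarrow> ((nat \<rightharpoonup> 'y) \<Rightarrow> real)" where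
  "Msum F = (\<lambda>\<theta>. \<Sum>j\<in>dom \<theta>. \<Sum>y\<in>UNIV. F (\<theta>(j \<mapsto> y)))"

lemma Theta_finite: "\<theta> \<in> Theta n k \<Longrightarrow> finite (dom \<theta>)"
  unfolding Theta_def by (auto intro: finite_subset)

lemma up_set:
  assumes "\<phi> \<in> Theta n h"
  shows "{\<theta>\<in>Theta n (Suc h). \<phi> \<subseteq>\<^sub>m \<theta>} = (\<lambda>(x,y). \<phi>(x\<mapsto>y)) ` (({1..n} - dom \<phi>) \<times> UNIV)"
proof
  have fin: "finite (dom \<phi>)" using Theta_finite[OF assms] .
  show "(\<lambda>(x,y). \<phi>(x\<mapsto>y)) ` (({1..n} - dom \<phi>) \<times> UNIV) \<subseteq> {\<theta>\<in>Theta n (Suc h). \<phi> \<subseteq>\<^sub>m \<theta>}"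
  proof (rule subsetI)
    fix t assume "t \<in> (\<lambda>(x,y). \<phi>(x\<mapsto>y)) ` (({1..n} - dom \<phi>) \<times> UNIV)"
    then obtain p where p: "p \<in> ({1..n} - dom \<phi>) \<times> UNIV" "t = (\<lambda>(x,y). \<phi>(x\<mapsto>y)) p" by blast
    obtain x y where xy: "p = (x,y)" by (cases p) blast
    have x: "x \<in> {1..n}" "x \<notin> dom \<phi>" using p(1) xy by auto
    have t: "t = \<phi>(x\<mapsto>y)" using p(2) xy by simp
    have d: "dom (\<phi>(x\<mapsto>y)) = insert x (dom \<phi>)" by simp
    have c0: "card (dom \<phi>) = h" "dom \<phi> \<subseteq> {1..n}" using assms unfolding Theta_def by auto
    have c: "card (insert x (dom \<phi>)) = Suc h" using card_insert_disjoint[OF fin x(2)] c0(1) by linarith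
    have "\<phi>(x\<mapsto>y) \<in> Theta n (Suc h)" unfolding Theta_def using d c c0(2) x(1) by auto
    moreover have "\<phi> \<subseteq>\<^sub>m \<phi>(x\<mapsto>y)" using x(2) unfolding map_le_def by auto
    ultimately show "t \<in> {\<theta>\<in>Theta n (Suc h). \<phi> \<subseteq>\<^sub>m \<theta>}" using t by simp
  qed
next
  show "{\<theta>\<in>Theta n (Suc h). \<phi> \<subseteq>\<^sub>m \<theta>} \<subseteq> (\<lambda>(x,y). \<phi>(x\<mapsto>y)) ` (({1..n} - dom \<phi>) \<times> UNIV)"
  proof clarify
    fix \<theta> assume th: "\<theta> \<in> Theta n (Suc h)" "\<phi> \<subseteq>\<^sub>m \<theta>"
    have sub: "dom \<phi> \<subseteq> dom \<theta>" using th(2) by (rule map_le_implies_dom_le)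
    have ft: "finite (dom \<theta>)" using Theta_finite[OF th(1)] .
    have "card (dom \<theta> - dom \<phi>) = 1"
      using card_Diff_subset[OF finite_subset[OF sub ft] sub] th(1) assms by (simp add: Theta_def)
    then obtain x where x: "dom \<theta> - dom \<phi> = {x}" by (auto simp: card_Suc_eq)
    have xd: "x \<in> dom \<theta>" "x \<notin> dom \<phi>" using x by blast+
    have eq: "\<theta> = \<phi>(x \<mapsto> the (\<theta> x))"
    proof
      fix z show "\<theta> z = (\<phi>(x \<mapsto> the (\<theta> x))) z"
      proof (cases "z \<in> dom \<phi>")
        case True
        then have "\<phi> z = \<theta> z" using th(2) unfolding map_le_def by blast
        moreover have "z \<noteq> x" using True xd(2) by blast
        ultimately show ?thesis by simp
      next
        case False
        show ?thesis
        proof (cases "z = x")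
          case True
          obtain v where "\<theta> x = Some v" using xd(1) by blast
          then show ?thesis using True by simp
        next
          case False2: False
          then have "z \<notin> dom \<theta>" using x False by blast
          then have "\<theta> z = None" by blast
          moreover have "\<phi> z = None" using False by blast
          ultimately show ?thesis using False2 by simp
        qed
      qed
    qed
    have "dom \<theta> \<subseteq> {1..n}" using th(1) unfolding Theta_def by blast
    then have "x \<in> {1..n}" "x \<notin> dom \<phi>" using xd by blast+
    then show "\<theta> \<in> (\<lambda>(x,y). \<phi>(x\<mapsto>y)) ` (({1..n} - dom \<phi>) \<times> UNIV)"
      using eq by (intro image_eqI[of _ _ "(x, the (\<theta> x))"]) auto
  qed
qed

lemma up_inj: "inj_on (\<lambda>(x,y). \<phi>(x\<mapsto>y)) (({1..n} - dom \<phi>) \<times> UNIV)"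
proof (rule inj_onI)
  fix p p' assume P: "p \<in> ({1..n} - dom \<phi>) \<times> UNIV" "p' \<in> ({1..n} - dom \<phi>) \<times> UNIV"
    and e0: "(\<lambda>(x,y). \<phi>(x\<mapsto>y)) p = (\<lambda>(x,y). \<phi>(x\<mapsto>y)) p'"
  obtain x y x' y' where pp: "p = (x,y)" "p' = (x',y')" by (cases p, cases p') auto
  have A: "x \<notin> dom \<phi>" "x' \<notin> dom \<phi>" using P pp by auto
  have e: "\<phi>(x \<mapsto> y) = \<phi>(x' \<mapsto> y')" using e0 pp by simp
  from fun_cong[OF e, of x] have "Some y = (\<phi>(x' \<mapsto> y')) x" by simp
  then show "p = p'" using A pp by (cases "x = x'") auto
qed

lemma down_set:
  assumes "\<theta> \<in> Theta n (Suc h)"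
  shows "{\<psi>\<in>Theta n h. \<psi> \<subseteq>\<^sub>m \<theta>} = (\<lambda>i. \<theta>(i:=None)) ` dom \<theta>"
proof
  have ft: "finite (dom \<theta>)" using Theta_finite[OF assms] .
  show "(\<lambda>i. \<theta>(i:=None)) ` dom \<theta> \<subseteq> {\<psi>\<in>Theta n h. \<psi> \<subseteq>\<^sub>m \<theta>}"
  proof (rule subsetI)
    fix t assume "t \<in> (\<lambda>i. \<theta>(i:=None)) ` dom \<theta>"
    then obtain i where i: "i \<in> dom \<theta>" and t: "t = \<theta>(i:=None)" by blast
    have "dom (\<theta>(i:=None)) = dom \<theta> - {i}" by auto
    then have "\<theta>(i:=None) \<in> Theta n h" using assms i ft by (auto simp: Theta_def)
    moreover have "\<theta>(i:=None) \<subseteq>\<^sub>m \<theta>" by (auto simp: map_le_def)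
    ultimately show "t \<in> {\<psi>\<in>Theta n h. \<psi> \<subseteq>\<^sub>m \<theta>}" using t by simp
  qed
next
  show "{\<psi>\<in>Theta n h. \<psi> \<subseteq>\<^sub>m \<theta>} \<subseteq> (\<lambda>i. \<theta>(i:=None)) ` dom \<theta>"
  proof clarify
    fix \<psi> assume ps: "\<psi> \<in> Theta n h" "\<psi> \<subseteq>\<^sub>m \<theta>"
    have sub: "dom \<psi> \<subseteq> dom \<theta>" using ps(2) by (rule map_le_implies_dom_le)
    have ft: "finite (dom \<theta>)" using Theta_finite[OF assms] .
    have "card (dom \<theta> - dom \<psi>) = 1"
      using card_Diff_subset[OF finite_subset[OF sub ft] sub] ps(1) assms by (simp add: Theta_def)
    then obtain i where i: "dom \<theta> - dom \<psi> = {i}" by (auto simp: card_Suc_eq)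
    have id: "i \<in> dom \<theta>" "i \<notin> dom \<psi>" using i by blast+
    have eq: "\<psi> = \<theta>(i:=None)"
    proof
      fix z show "\<psi> z = (\<theta>(i:=None)) z"
      proof (cases "z \<in> dom \<psi>")
        case True
        then have "\<psi> z = \<theta> z" using ps(2) unfolding map_le_def by blast
        moreover have "z \<noteq> i" using True id(2) by blast
        ultimately show ?thesis by simp
      next
        case False
        then have "z = i \<or> \<theta> z = None" using i by blast
        moreover have "\<psi> z = None" using False by blast
        ultimately show ?thesis by (metis fun_upd_apply)
      qed
    qed
    have "i \<in> dom \<theta>" using id by blast
    then show "\<psi> \<in> (\<lambda>i. \<theta>(i:=None)) ` dom \<theta>" using eq by auto
  qed
qed

lemma down_inj: "inj_on (\<lambda>i. \<theta>(i:=None)) (dom \<theta>)"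
proof (rule inj_onI)
  fix i j assume "i \<in> dom \<theta>" "j \<in> dom \<theta>" "\<theta>(i:=None) = \<theta>(j:=None)"
  then show "i = j" by (metis domD fun_upd_apply option.distinct(1))
qed

lemma Dstar_formula:
  assumes "\<theta> \<in> Theta n (Suc h)"
  shows "Dstar n (Suc h) F \<theta> = (\<Sum>i\<in>dom \<theta>. F (\<theta>(i:=None)))"
  using assms unfolding Dstar_def
  by (simp add: down_set[OF assms] sum.reindex[OF down_inj])

lemma Dop_formula:
  assumes "\<phi> \<in> Theta n h"
  shows "Dop n (Suc h) G \<phi> = (\<Sum>x\<in>{1..n} - dom \<phi>. \<Sum>y\<in>UNIV. G (\<phi>(x\<mapsto>y)))"
proof -
  have "Dop n (Suc h) G \<phi> = sum G ((\<lambda>(x,y). \<phi>(x\<mapsto>y)) ` (({1..n} - dom \<phi>) \<times> UNIV))"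
    using assms unfolding Dop_def by (simp add: up_set[OF assms])
  also have "\<dots> = (\<Sum>p\<in>({1..n} - dom \<phi>) \<times> UNIV. G ((\<lambda>(x,y). \<phi>(x\<mapsto>y)) p))"
    by (rule sum.reindex[OF up_inj, unfolded comp_def])
  also have "\<dots> = (\<Sum>x\<in>{1..n} - dom \<phi>. \<Sum>y\<in>UNIV. G (\<phi>(x\<mapsto>y)))"
    unfolding sum.cartesian_product by (simp add: case_prod_beta)
  finally show ?thesis .
qed


definition cross :: "nat \<Rightarrow> ((nat \<rightharpoonup> 'y::finite) \<Rightarrow> real) \<Rightarrow> (nat \<rightharpoonup> 'y) \<Rightarrow> real" where
  "cross n F \<phi> = (\<Sum>i\<in>dom \<phi>. \<Sum>x\<in>{1..n} - dom \<phi>. \<Sum>y\<in>UNIV. F ((\<phi>(i:=None))(x\<mapsto>y)))"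

lemma upd_in_Theta:
  assumes "\<phi> \<in> Theta n h" "x \<in> {1..n} - dom \<phi>"
  shows "\<phi>(x\<mapsto>y) \<in> Theta n (Suc h)"
proof -
  have "\<phi>(x\<mapsto>y) \<in> (\<lambda>(x,y). \<phi>(x\<mapsto>y)) ` (({1..n} - dom \<phi>) \<times> UNIV)" using assms(2) by force
  then show ?thesis unfolding up_set[OF assms(1), symmetric] by blast
qed

lemma del_in_Theta:
  assumes "\<theta> \<in> Theta n (Suc h)" "i \<in> dom \<theta>"
  shows "\<theta>(i:=None) \<in> Theta n h"
proof -
  have "\<theta>(i:=None) \<in> (\<lambda>i. \<theta>(i:=None)) ` dom \<theta>" using assms(2) by blast
  then show ?thesis unfolding down_set[OF assms(1), symmetric] by blast
qed

lemma L1: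
  fixes F :: "(nat \<rightharpoonup> 'y::finite) \<Rightarrow> real"
  assumes th: "\<phi> \<in> Theta n h"
  shows "Dop n (Suc h) (Dstar n (Suc h) F) \<phi>
     = real (card ({1..n} - dom \<phi>)) * real (card (UNIV::'y set)) * F \<phi> + cross n F \<phi>"
proof -
  let ?S = "{1..n} - dom \<phi>"
  have fin: "finite (dom \<phi>)" using Theta_finite[OF th] .
  have step: "Dstar n (Suc h) F (\<phi>(x\<mapsto>y)) = F \<phi> + (\<Sum>i\<in>dom \<phi>. F ((\<phi>(i:=None))(x\<mapsto>y)))"
    if x: "x \<in> ?S" for x y
  proof -
    have xn: "x \<notin> dom \<phi>" using x by blast
    have "Dstar n (Suc h) F (\<phi>(x\<mapsto>y)) = (\<Sum>i\<in>insert x (dom \<phi>). F ((\<phi>(x\<mapsto>y))(i:=None)))"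
      using Dstar_formula[OF upd_in_Theta[OF th x]] by simp
    also have "\<dots> = F ((\<phi>(x\<mapsto>y))(x:=None)) + (\<Sum>i\<in>dom \<phi>. F ((\<phi>(x\<mapsto>y))(i:=None)))"
      using fin xn by (rule sum.insert)
    also have "(\<phi>(x\<mapsto>y))(x:=None) = \<phi>" using xn by (auto simp: fun_eq_iff)
    also have "(\<Sum>i\<in>dom \<phi>. F ((\<phi>(x\<mapsto>y))(i:=None))) = (\<Sum>i\<in>dom \<phi>. F ((\<phi>(i:=None))(x\<mapsto>y)))"
    proof (rule sum.cong[OF refl])
      fix i assume "i \<in> dom \<phi>"
      then have "i \<noteq> x" using xn by blast
      then show "F ((\<phi>(x\<mapsto>y))(i:=None)) = F ((\<phi>(i:=None))(x\<mapsto>y))" by (metis fun_upd_twist)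
    qed
    finally show ?thesis .
  qed
  have "Dop n (Suc h) (Dstar n (Suc h) F) \<phi> = (\<Sum>x\<in>?S. \<Sum>y\<in>UNIV. Dstar n (Suc h) F (\<phi>(x\<mapsto>y)))"
    by (rule Dop_formula[OF th])
  also have "\<dots> = (\<Sum>x\<in>?S. \<Sum>y\<in>UNIV. F \<phi> + (\<Sum>i\<in>dom \<phi>. F ((\<phi>(i:=None))(x\<mapsto>y))))"
    using step by simp
  also have "\<dots> = (\<Sum>x\<in>?S. \<Sum>y\<in>(UNIV::'y set). F \<phi>) + (\<Sum>x\<in>?S. \<Sum>y\<in>UNIV. \<Sum>i\<in>dom \<phi>. F ((\<phi>(i:=None))(x\<mapsto>y)))"
    by (simp add: sum.distrib)
  also have "(\<Sum>x\<in>?S. \<Sum>y\<in>(UNIV::'y set). F \<phi>) = real (card ?S) * real (card (UNIV::'y set)) * F \<phi>"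
    by simp
  also have "(\<Sum>x\<in>?S. \<Sum>y\<in>UNIV. \<Sum>i\<in>dom \<phi>. F ((\<phi>(i:=None))(x\<mapsto>y))) = cross n F \<phi>"
    unfolding cross_def
    by (subst sum.swap) (subst (2) sum.swap, rule refl)
  finally show ?thesis .
qed

lemma L2:
  fixes F :: "(nat \<rightharpoonup> 'y::finite) \<Rightarrow> real"
  assumes th: "\<phi> \<in> Theta n h"
  shows "Dstar n h (Dop n h F) \<phi> = Msum F \<phi> + cross n F \<phi>"
proof (cases h)
  case 0
  then have "dom \<phi> = {}" using th Theta_finite[OF th] by (simp add: Theta_def)
  then show ?thesis using 0 by (simp add: Dstar_def Dop_def Msum_def cross_def)
next
  case (Suc h')
  let ?S = "{1..n} - dom \<phi>"
  have fin: "finite (dom \<phi>)" using Theta_finite[OF th] .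
  have th': "\<phi> \<in> Theta n (Suc h')" using th Suc by simp
  have step: "Dop n (Suc h') F (\<phi>(i:=None)) = (\<Sum>y\<in>UNIV. F (\<phi>(i\<mapsto>y)))
      + (\<Sum>x\<in>?S. \<Sum>y\<in>UNIV. F ((\<phi>(i:=None))(x\<mapsto>y)))" if i: "i \<in> dom \<phi>" for i
  proof -
    have dd: "{1..n} - dom (\<phi>(i:=None)) = insert i ?S"
      using i th by (auto simp: Theta_def)
    have iS: "i \<notin> ?S" using i by blast
    have "Dop n (Suc h') F (\<phi>(i:=None)) = (\<Sum>x\<in>insert i ?S. \<Sum>y\<in>UNIV. F ((\<phi>(i:=None))(x\<mapsto>y)))"
      using Dop_formula[OF del_in_Theta[OF th' i]] dd by simp
    also have "\<dots> = (\<Sum>y\<in>UNIV. F ((\<phi>(i:=None))(i\<mapsto>y))) + (\<Sum>x\<in>?S. \<Sum>y\<in>UNIV. F ((\<phi>(i:=None))(x\<mapsto>y)))"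
      by (rule sum.insert) (use iS in auto)
    finally show ?thesis by simp
  qed
  have "Dstar n h (Dop n h F) \<phi> = (\<Sum>i\<in>dom \<phi>. Dop n (Suc h') F (\<phi>(i:=None)))"
    using Dstar_formula[OF th'] Suc by simp
  also have "\<dots> = (\<Sum>i\<in>dom \<phi>. (\<Sum>y\<in>UNIV. F (\<phi>(i\<mapsto>y)))
      + (\<Sum>x\<in>?S. \<Sum>y\<in>UNIV. F ((\<phi>(i:=None))(x\<mapsto>y))))"
    by (rule sum.cong) (simp_all add: step)
  also have "\<dots> = Msum F \<phi> + cross n F \<phi>"
    by (simp add: sum.distrib Msum_def cross_def)
  finally show ?thesis .
qed


lemma Theta_dom_eq: "dom \<theta>' = dom \<theta> \<Longrightarrow> (\<theta>' \<in> Theta n k) = (\<theta> \<in> Theta n k)"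
  by (simp add: Theta_def)

lemma dom_upd_in: "j \<in> dom \<theta> \<Longrightarrow> dom (\<theta>(j\<mapsto>y)) = dom \<theta>"
  by auto

lemma L3:
  fixes G :: "(nat \<rightharpoonup> 'y::finite) \<Rightarrow> real"
  shows "Msum (Dstar n (Suc h) G) \<theta>
     = Dstar n (Suc h) (Msum G) \<theta> + real (card (UNIV::'y set)) * Dstar n (Suc h) G \<theta>"
proof (cases "\<theta> \<in> Theta n (Suc h)")
  case False
  have "Dstar n (Suc h) G (\<theta>(j\<mapsto>y)) = 0" if "j \<in> dom \<theta>" for j y
  proof -
    have "\<theta>(j\<mapsto>y) \<notin> Theta n (Suc h)" using False Theta_dom_eq[OF dom_upd_in[OF that]] by blast
    then show ?thesis by (simp add: Dstar_def)
  qed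
  then have "Msum (Dstar n (Suc h) G) \<theta> = 0" unfolding Msum_def by simp
  moreover have "Dstar n (Suc h) (Msum G) \<theta> = 0" "Dstar n (Suc h) G \<theta> = 0"
    using False by (simp_all add: Dstar_def)
  ultimately show ?thesis by simp
next
  case True
  let ?D = "dom \<theta>"
  let ?c = "real (card (UNIV::'y set))"
  have fin: "finite ?D" using Theta_finite[OF True] .
  have step: "Dstar n (Suc h) G (\<theta>(j\<mapsto>y)) = G (\<theta>(j:=None)) + (\<Sum>i\<in>?D - {j}. G ((\<theta>(i:=None))(j\<mapsto>y)))"
    if j: "j \<in> ?D" for j y
  proof -
    have T: "\<theta>(j\<mapsto>y) \<in> Theta n (Suc h)" using True Theta_dom_eq[OF dom_upd_in[OF j]] by blast
    have "Dstar n (Suc h) G (\<theta>(j\<mapsto>y)) = (\<Sum>i\<in>?D. G ((\<theta>(j\<mapsto>y))(i:=None)))"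
      using Dstar_formula[OF T] dom_upd_in[OF j] by simp
    also have "\<dots> = G ((\<theta>(j\<mapsto>y))(j:=None)) + (\<Sum>i\<in>?D - {j}. G ((\<theta>(j\<mapsto>y))(i:=None)))"
      using fin j by (rule sum.remove)
    also have "(\<theta>(j\<mapsto>y))(j:=None) = \<theta>(j:=None)" by simp
    also have "(\<Sum>i\<in>?D - {j}. G ((\<theta>(j\<mapsto>y))(i:=None))) = (\<Sum>i\<in>?D - {j}. G ((\<theta>(i:=None))(j\<mapsto>y)))"
    proof (rule sum.cong[OF refl])
      fix i assume "i \<in> ?D - {j}"
      then have "i \<noteq> j" by blast
      then show "G ((\<theta>(j\<mapsto>y))(i:=None)) = G ((\<theta>(i:=None))(j\<mapsto>y))" by (metis fun_upd_twist)
    qed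
    finally show ?thesis .
  qed
  have "Msum (Dstar n (Suc h) G) \<theta> = (\<Sum>j\<in>?D. \<Sum>y\<in>UNIV. Dstar n (Suc h) G (\<theta>(j\<mapsto>y)))"
    by (simp add: Msum_def)
  also have "\<dots> = (\<Sum>j\<in>?D. \<Sum>y\<in>(UNIV::'y set). G (\<theta>(j:=None)) + (\<Sum>i\<in>?D - {j}. G ((\<theta>(i:=None))(j\<mapsto>y))))"
    by (rule sum.cong[OF refl]) (simp add: step)
  also have "\<dots> = (\<Sum>j\<in>?D. ?c * G (\<theta>(j:=None))) + (\<Sum>j\<in>?D. \<Sum>i\<in>?D - {j}. \<Sum>y\<in>UNIV. G ((\<theta>(i:=None))(j\<mapsto>y)))"
    by (simp add: sum.distrib sum.swap[of _ "?D - {_}"])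
  also have "(\<Sum>j\<in>?D. \<Sum>i\<in>?D - {j}. \<Sum>y\<in>UNIV. G ((\<theta>(i:=None))(j\<mapsto>y)))
      = (\<Sum>j\<in>?D. \<Sum>i\<in>{i\<in>?D. j \<noteq> i}. \<Sum>y\<in>UNIV. G ((\<theta>(i:=None))(j\<mapsto>y)))"
    by (rule sum.cong[OF refl], rule sum.cong) auto
  also have "\<dots> = (\<Sum>i\<in>?D. \<Sum>j\<in>{j\<in>?D. j \<noteq> i}. \<Sum>y\<in>UNIV. G ((\<theta>(i:=None))(j\<mapsto>y)))"
    by (rule sum.swap_restrict[OF fin fin])
  also have "\<dots> = (\<Sum>i\<in>?D. Msum G (\<theta>(i:=None)))"
  proof (rule sum.cong[OF refl])
    fix i assume "i \<in> ?D"
    have "dom (\<theta>(i:=None)) = {j\<in>?D. j \<noteq> i}" by auto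
    then show "(\<Sum>j\<in>{j\<in>?D. j \<noteq> i}. \<Sum>y\<in>UNIV. G ((\<theta>(i:=None))(j\<mapsto>y))) = Msum G (\<theta>(i:=None))"
      by (simp add: Msum_def)
  qed
  also have "\<dots> = Dstar n (Suc h) (Msum G) \<theta>" using Dstar_formula[OF True] by simp
  also have "(\<Sum>j\<in>?D. ?c * G (\<theta>(j:=None))) = ?c * Dstar n (Suc h) G \<theta>"
    using Dstar_formula[OF True] by (simp add: sum_distrib_left)
  finally show ?thesis by simp
qed

lemma Dstar_scale: "Dstar n k (\<lambda>\<theta>. c * G \<theta>) = (\<lambda>\<theta>. c * Dstar n k G \<theta>)"
  by (simp add: Dstar_def sum_distrib_left fun_eq_iff)

lemma Msum_scale: "Msum (\<lambda>\<theta>. c * G \<theta>) = (\<lambda>\<theta>. c * Msum G \<theta>)"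
  by (simp add: Msum_def sum_distrib_left fun_eq_iff)

lemma Msum_add: "Msum (\<lambda>\<theta>. F \<theta> + G \<theta>) = (\<lambda>\<theta>. Msum F \<theta> + Msum G \<theta>)"
  by (simp add: Msum_def sum.distrib fun_eq_iff)

lemma Msum_zero: "Msum (\<lambda>_. 0) = (\<lambda>_. 0)"
  by (simp add: Msum_def fun_eq_iff)

lemma fspan_induct:
  assumes "f \<in> fspan G" "\<And>g. g \<in> G \<Longrightarrow> P g" "P (\<lambda>_. 0)"
    "\<And>f g. P f \<Longrightarrow> P g \<Longrightarrow> P (\<lambda>x. f x + g x)" "\<And>c f. P f \<Longrightarrow> P (\<lambda>x. c * f x)"
  shows "P f"
proof -
  obtain S c where S: "finite S" "S \<subseteq> G" "f = (\<lambda>x. \<Sum>g\<in>S. c g * g x)"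
    using assms(1) unfolding fspan_def by blast
  have "P (\<lambda>x. \<Sum>g\<in>S. c g * g x)" using S(1,2)
  proof (induction S rule: finite_induct)
    case empty then show ?case using assms(3) by simp
  next
    case (insert g S)
    have "P (\<lambda>x. c g * g x + (\<Sum>g\<in>S. c g * g x))"
      using assms(4)[OF assms(5)[OF assms(2)] insert.IH] insert.prems by blast
    then show ?case using insert.hyps by simp
  qed
  then show ?thesis using S(3) by simp
qed


lemma eig1_const:
  fixes q :: "'y::finite \<Rightarrow> 'y \<Rightarrow> real"
  assumes st: "stochastic_matrix q" and irr: "irreducible_matrix q"
    and f: "Qop q f = f"
  shows "f y = f y'"
proof -
  let ?M = "Max (range f)"
  have "?M \<in> range f" by (rule Max_in) auto
  then obtain y0 where y0: "f y0 = ?M" by (metis imageE)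
  have le: "f z \<le> ?M" for z by simp
  have all: "f b = ?M" if "(y0, b) \<in> {(a, b). 0 < q a b}\<^sup>*" for b
    using that
  proof (induction rule: rtrancl_induct)
    case base then show ?case using y0 .
  next
    case (step a b)
    have qab: "0 < q a b" using step.hyps(2) by simp
    have fa: "f a = (\<Sum>y'\<in>UNIV. q a y' * f y')" using fun_cong[OF f, of a] by (simp add: Qop_def)
    have s1: "(\<Sum>y'\<in>UNIV. q a y') = 1" and nn: "\<And>y'. 0 \<le> q a y'" using st by (auto simp: stochastic_matrix_def)
    have "(\<Sum>y'\<in>UNIV. q a y' * (?M - f y')) = ?M * (\<Sum>y'\<in>UNIV. q a y') - (\<Sum>y'\<in>UNIV. q a y' * f y')"
      by (simp add: algebra_simps sum_subtractf sum_distrib_left sum_distrib_right)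
    also have "\<dots> = 0" using s1 fa step.IH by simp
    finally have z: "(\<Sum>y'\<in>UNIV. q a y' * (?M - f y')) = 0" .
    have "\<forall>y'\<in>UNIV. q a y' * (?M - f y') = 0"
      using sum_nonneg_eq_0_iff[of UNIV "\<lambda>y'. q a y' * (?M - f y')"] z nn le by auto
    then have "q a b * (?M - f b) = 0" by blast
    then show ?case using qab by simp
  qed
  have "f y = ?M" "f y' = ?M" using all irr unfolding irreducible_matrix_def by blast+
  then show ?thesis by simp
qed

lemma eig_sum_zero:
  fixes q :: "'y::finite \<Rightarrow> 'y \<Rightarrow> real"
  assumes sy: "symmetric_matrix q" and st: "stochastic_matrix q"
    and f: "Qop q f = (\<lambda>y. \<mu> * f y)" and mu: "\<mu> \<noteq> 1"
  shows "(\<Sum>y\<in>UNIV. f y) = 0"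
proof -
  have "(\<Sum>y\<in>UNIV. \<mu> * f y) = (\<Sum>y\<in>UNIV. \<Sum>y'\<in>UNIV. q y y' * f y')"
    using f by (metis Qop_def)
  also have "\<dots> = (\<Sum>y'\<in>UNIV. \<Sum>y\<in>UNIV. q y y' * f y')" by (rule sum.swap)
  also have "\<dots> = (\<Sum>y'\<in>UNIV. f y' * (\<Sum>y\<in>UNIV. q y' y))"
    using sy by (simp add: symmetric_matrix_def sum_distrib_left mult.commute)
  also have "\<dots> = (\<Sum>y'\<in>UNIV. f y')" using st by (simp add: stochastic_matrix_def)
  finally have "\<mu> * (\<Sum>y\<in>UNIV. f y) = (\<Sum>y\<in>UNIV. f y)" by (simp add: sum_distrib_left)
  then show ?thesis using mu
    by (metis mult_cancel_right1 mult.commute)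
qed

lemma fundamental_props:
  fixes q :: "'y::finite \<Rightarrow> 'y \<Rightarrow> real"
  assumes sy: "symmetric_matrix q" and st: "stochastic_matrix q" and irr: "irreducible_matrix q"
    and l0: "lam 0 = 1" and inj: "inj_on lam {0..m}"
    and fu: "fundamental n q m lam b A F"
  shows "Msum F = (\<lambda>\<theta>. real (card (UNIV::'y set)) * real (b 0) * F \<theta>)"
    and "\<And>\<theta>. \<theta> \<notin> Theta n (type_size m b) \<Longrightarrow> F \<theta> = 0"
proof -
  let ?c = "real (card (UNIV::'y set))"
  obtain Fj ij where A: "A \<subseteq> {1..n}" "card A = type_size m b"
    and E: "\<forall>j\<in>A. ij j \<le> m \<and> Fj j \<in> eigenspace q (lam (ij j))"
    and B: "\<forall>i\<le>m. card {j\<in>A. ij j = i} = b i"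
    and F: "F = (\<lambda>\<theta>. if dom \<theta> = A then (\<Prod>j\<in>A. Fj j (the (\<theta> j))) else 0)"
    using fu unfolding fundamental_def by blast
  have finA: "finite A" using A(1) by (rule finite_subset) simp
  show "\<And>\<theta>. \<theta> \<notin> Theta n (type_size m b) \<Longrightarrow> F \<theta> = 0"
    using A by (auto simp: F Theta_def)
  have sumj: "(\<Sum>y\<in>UNIV. Fj j y) = (if ij j = 0 then ?c * Fj j z else 0)" if j: "j \<in> A" for j z
  proof (cases "ij j = 0")
    case True
    then have "Qop q (Fj j) = Fj j" using E j l0 by (auto simp: eigenspace_def)
    then have cst: "Fj j y = Fj j z" for y using eig1_const[OF st irr] by blast
    have "(\<Sum>y\<in>UNIV. Fj j y) = (\<Sum>y\<in>(UNIV::'y set). Fj j z)" by (rule sum.cong[OF refl]) (rule cst)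
    then show ?thesis using True by simp
  next
    case False
    have "ij j \<le> m" using E j by blast
    then have "lam (ij j) \<noteq> lam 0" using False inj_onD[OF inj, of "ij j" 0] by auto
    moreover have "Qop q (Fj j) = (\<lambda>y. lam (ij j) * Fj j y)" using E j by (auto simp: eigenspace_def)
    ultimately show ?thesis using eig_sum_zero[OF sy st] False l0 by metis
  qed
  show "Msum F = (\<lambda>\<theta>. ?c * real (b 0) * F \<theta>)"
  proof
    fix \<theta>
    show "Msum F \<theta> = ?c * real (b 0) * F \<theta>"
    proof (cases "dom \<theta> = A")
      case False
      then have "F (\<theta>(j\<mapsto>y)) = 0" if "j \<in> dom \<theta>" for j y
        using dom_upd_in[OF that] by (simp add: F)
      then show ?thesis using False by (simp add: Msum_def F)
    next
      case True
      have trm: "(\<Sum>y\<in>UNIV. F (\<theta>(j\<mapsto>y))) = (if ij j = 0 then ?c * F \<theta> else 0)" if j: "j \<in> A" for j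
      proof -
        let ?R = "\<Prod>i\<in>A - {j}. Fj i (the (\<theta> i))"
        have p: "F (\<theta>(j\<mapsto>y)) = Fj j y * ?R" for y
        proof -
          have "F (\<theta>(j\<mapsto>y)) = (\<Prod>i\<in>A. Fj i (the ((\<theta>(j\<mapsto>y)) i)))"
            using True j dom_upd_in[of j \<theta> y] by (simp add: F)
          also have "\<dots> = Fj j (the ((\<theta>(j\<mapsto>y)) j)) * (\<Prod>i\<in>A - {j}. Fj i (the ((\<theta>(j\<mapsto>y)) i)))"
            using finA j by (rule prod.remove)
          also have "(\<Prod>i\<in>A - {j}. Fj i (the ((\<theta>(j\<mapsto>y)) i))) = ?R"
            by (rule prod.cong) auto
          also have "the ((\<theta>(j\<mapsto>y)) j) = y" by simp
          finally show ?thesis .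
        qed
        have Fth: "F \<theta> = Fj j (the (\<theta> j)) * ?R"
          using True prod.remove[OF finA j, of "\<lambda>i. Fj i (the (\<theta> i))"] by (simp add: F)
        have "(\<Sum>y\<in>UNIV. F (\<theta>(j\<mapsto>y))) = (\<Sum>y\<in>UNIV. Fj j y) * ?R"
          by (simp add: p sum_distrib_right)
        also have "\<dots> = (if ij j = 0 then ?c * F \<theta> else 0)"
          using sumj[OF j, of "the (\<theta> j)"] Fth by simp
        finally show ?thesis .
      qed
      have "Msum F \<theta> = (\<Sum>j\<in>A. if ij j = 0 then ?c * F \<theta> else 0)"
        unfolding Msum_def True by (rule sum.cong[OF refl]) (rule trm)
      also have "\<dots> = real (card {j\<in>A. ij j = 0}) * (?c * F \<theta>)"
        using finA by (simp add: sum.If_cases Int_def)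
      also have "card {j\<in>A. ij j = 0} = b 0" using B by simp
      finally show ?thesis by simp
    qed
  qed
qed


lemma tsize: "type_size m a = a 0 + type_ell m a"
  by (simp add: type_size_def type_ell_def sum.atLeast_Suc_atMost)

lemma tell_prime: "type_ell m (type_prime a) = type_ell m a"
  by (simp add: type_ell_def type_prime_def)

lemma tprime0: "type_prime a 0 = a 0 - 1"
  by (simp add: type_prime_def)

lemma tsize_prime: "type_size m (type_prime a) = a 0 - 1 + type_ell m a"
  using tsize[of m "type_prime a"] by (simp add: tell_prime tprime0)

lemma P_kernel: "type_size m b = k \<Longrightarrow> P_hbk n q m lam k b k = {F\<in>P_kb n q m lam k b. Dop n k F = (\<lambda>_. 0)}"
  by (cases k) simp_all

lemma P_step: "k < Suc h' \<Longrightarrow> type_size m b = Suc h' \<Longrightarrow> type_ell m b \<le> k \<Longrightarrow>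
   P_hbk n q m lam (Suc h') b k = Dstar n (Suc h') ` P_hbk n q m lam h' (type_prime b) k"
  by simp

lemma Pkb_props:
  fixes q :: "'y::finite \<Rightarrow> 'y \<Rightarrow> real"
  assumes sy: "symmetric_matrix q" and st: "stochastic_matrix q" and irr: "irreducible_matrix q"
    and l0: "lam 0 = 1" and inj: "inj_on lam {0..m}"
    and F: "F \<in> P_kb n q m lam h b"
  shows "(\<forall>\<theta>. \<theta> \<notin> Theta n h \<longrightarrow> F \<theta> = 0) \<and>
         Msum F = (\<lambda>\<theta>. real (card (UNIV::'y set)) * real (b 0) * F \<theta>)"
proof -
  let ?P = "\<lambda>F. (\<forall>\<theta>. \<theta> \<notin> Theta n h \<longrightarrow> F \<theta> = 0) \<and>
         Msum F = (\<lambda>\<theta>. real (card (UNIV::'y set)) * real (b 0) * F \<theta>)"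
  have z: "?P (\<lambda>_. 0)" by (simp add: Msum_zero)
  have ad: "?P (\<lambda>x. f x + g x)" if "?P f" "?P g" for f g
    using that by (simp add: Msum_add fun_eq_iff algebra_simps)
  have sc: "?P (\<lambda>x. c * f x)" if "?P f" for c f
    using that by (simp add: Msum_scale fun_eq_iff algebra_simps)
  have fund: "?P g" if "g \<in> P_kbA n q m lam h b A" for g A
    using that unfolding P_kbA_def
  proof (rule fspan_induct[where P = ?P])
    fix g assume "g \<in> {F. card A = h \<and> fundamental n q m lam b A F}"
    then have c: "card A = h" and fu: "fundamental n q m lam b A g" by auto
    have "type_size m b = h" using fu c by (simp add: fundamental_def)
    then show "?P g" using fundamental_props[OF sy st irr l0 inj fu] by simp
  qed (fact z, fact ad, fact sc)
  show ?thesis using F unfolding P_kb_def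
  proof (rule fspan_induct[where P = ?P])
    fix g assume "g \<in> (\<Union>A\<in>{A. A \<subseteq> {1..n} \<and> card A = h}. P_kbA n q m lam h b A)"
    then obtain A where "g \<in> P_kbA n q m lam h b A" by blast
    then show "?P g" by (rule fund)
  qed (fact z, fact ad, fact sc)
qed

lemma combine:
  fixes F :: "(nat \<rightharpoonup> 'y::finite) \<Rightarrow> real"
  assumes supp: "\<forall>\<theta>. \<theta> \<notin> Theta n h \<longrightarrow> F \<theta> = 0" and hn: "h \<le> n"
    and M: "Msum F = (\<lambda>\<theta>. \<mu> * F \<theta>)" and DD: "Dstar n h (Dop n h F) = (\<lambda>\<theta>. e * F \<theta>)"
  shows "Dop n (Suc h) (Dstar n (Suc h) F)
     = (\<lambda>\<theta>. (real (card (UNIV::'y set)) * (real n - real h) + e - \<mu>) * F \<theta>)"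
proof
  fix \<theta>
  show "Dop n (Suc h) (Dstar n (Suc h) F) \<theta>
     = (real (card (UNIV::'y set)) * (real n - real h) + e - \<mu>) * F \<theta>"
  proof (cases "\<theta> \<in> Theta n h")
    case False
    then show ?thesis using supp by (simp add: Dop_def)
  next
    case True
    have d: "dom \<theta> \<subseteq> {1..n}" "card (dom \<theta>) = h" using True by (auto simp: Theta_def)
    have "card ({1..n} - dom \<theta>) = n - h" using card_Diff_subset[OF finite_subset[OF d(1)] d(1)] d by simp
    then have cS: "real (card ({1..n} - dom \<theta>)) = real n - real h" using hn by simp
    have "e * F \<theta> = \<mu> * F \<theta> + cross n F \<theta>"
      using L2[OF True, of F] fun_cong[OF DD, of \<theta>] fun_cong[OF M, of \<theta>] by simp
    moreover note L1[OF True, of F, unfolded cS]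
    ultimately show ?thesis by (simp add: algebra_simps)
  qed
qed


lemma main_ind:
  fixes q :: "'y::finite \<Rightarrow> 'y \<Rightarrow> real"
  assumes sy: "symmetric_matrix q" and st: "stochastic_matrix q" and irr: "irreducible_matrix q"
    and l0: "lam 0 = 1" and inj: "inj_on lam {0..m}"
  shows "k \<le> h \<Longrightarrow> h < n \<Longrightarrow> type_size m a = h + 1 \<Longrightarrow> type_ell m a \<le> k \<Longrightarrow>
    F \<in> P_hbk n q m lam h (type_prime a) k \<Longrightarrow>
    (\<forall>\<theta>. \<theta> \<notin> Theta n h \<longrightarrow> F \<theta> = 0) \<and>
    Msum F = (\<lambda>\<theta>. real (card (UNIV::'y set)) * (real h - real (type_ell m a)) * F \<theta>) \<and>
    Dop n (Suc h) (Dstar n (Suc h) F) = (\<lambda>\<theta>. real (card (UNIV::'y set)) *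
        (real n + real (type_ell m a) - real k - real h) * real (h - k + 1) * F \<theta>)"
proof (induction h arbitrary: a F)
  let ?c = "real (card (UNIV::'y set))"
  have base: "(\<forall>\<theta>. \<theta> \<notin> Theta n h \<longrightarrow> F \<theta> = 0) \<and>
    Msum F = (\<lambda>\<theta>. ?c * (real h - real (type_ell m a)) * F \<theta>) \<and>
    Dop n (Suc h) (Dstar n (Suc h) F) = (\<lambda>\<theta>. ?c *
        (real n + real (type_ell m a) - real k - real h) * real (h - k + 1) * F \<theta>)"
    if hk: "k = h" and hn: "h < n" and sa: "type_size m a = h + 1" and la: "type_ell m a \<le> k"
      and F: "F \<in> P_hbk n q m lam h (type_prime a) k" for h a F
  proof -
    have a0: "a 0 = h + 1 - type_ell m a" "type_ell m a \<le> h" using sa tsize[of m a] la hk by auto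
    have sz: "type_size m (type_prime a) = h" using tsize_prime[of m a] a0 by simp
    have F2: "F \<in> P_kb n q m lam h (type_prime a)" "Dop n h F = (\<lambda>_. 0)"
      using F P_kernel[OF sz, of n q lam] hk by auto
    have b0: "real (type_prime a 0) = real h - real (type_ell m a)" using a0 tprime0[of a] by simp
    have PP: "(\<forall>\<theta>. \<theta> \<notin> Theta n h \<longrightarrow> F \<theta> = 0)"
       "Msum F = (\<lambda>\<theta>. ?c * (real h - real (type_ell m a)) * F \<theta>)"
      using Pkb_props[OF sy st irr l0 inj F2(1)] b0 by auto
    have DD: "Dstar n h (Dop n h F) = (\<lambda>\<theta>. 0 * F \<theta>)"
      using F2(2) by (simp add: Dstar_def fun_eq_iff)
    have "Dop n (Suc h) (Dstar n (Suc h) F)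
      = (\<lambda>\<theta>. (?c * (real n - real h) + 0 - ?c * (real h - real (type_ell m a))) * F \<theta>)"
      using combine[OF PP(1) _ _ DD] hn PP(2) by (simp add: mult.assoc)
    also have "\<dots> = (\<lambda>\<theta>. ?c * (real n + real (type_ell m a) - real k - real h) * real (h - k + 1) * F \<theta>)"
      using hk by (simp add: algebra_simps)
    finally show ?thesis using PP by simp
  qed
  {
    case 0
    then show ?case using base by blast
  next
    case (Suc h')
    show ?case
    proof (cases "k = Suc h'")
      case True then show ?thesis using base Suc.prems by blast
    next
      case False
      then have kh: "k \<le> h'" using Suc.prems by simp
      have a0: "1 \<le> a 0" using Suc.prems(3,4) tsize[of m a] kh by simp
      have sz: "type_size m (type_prime a) = Suc h'" using tsize_prime[of m a] Suc.prems(3) tsize[of m a] a0 by simp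
      have la': "type_ell m (type_prime a) \<le> k" using Suc.prems(4) tell_prime by simp
      obtain G where G: "G \<in> P_hbk n q m lam h' (type_prime (type_prime a)) k"
        and FG: "F = Dstar n (Suc h') G"
        using Suc.prems(5) P_step[OF _ sz la', of n q lam] kh by auto
      have IH: "(\<forall>\<theta>. \<theta> \<notin> Theta n h' \<longrightarrow> G \<theta> = 0) \<and>
        Msum G = (\<lambda>\<theta>. ?c * (real h' - real (type_ell m a)) * G \<theta>) \<and>
        Dop n (Suc h') (Dstar n (Suc h') G) = (\<lambda>\<theta>. ?c *
          (real n + real (type_ell m a) - real k - real h') * real (h' - k + 1) * G \<theta>)"
        using Suc.IH[OF kh _ _ la' G] Suc.prems(2) sz tell_prime[of m a] by simp
      let ?e = "?c * (real n + real (type_ell m a) - real k - real h') * real (h' - k + 1)"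
      have supp: "\<forall>\<theta>. \<theta> \<notin> Theta n (Suc h') \<longrightarrow> F \<theta> = 0" using FG by (simp add: Dstar_def)
      have M: "Msum F = (\<lambda>\<theta>. ?c * (real (Suc h') - real (type_ell m a)) * F \<theta>)"
      proof
        fix \<theta>
        have "Msum F \<theta> = Dstar n (Suc h') (Msum G) \<theta> + ?c * F \<theta>"
          using L3[of n h' G \<theta>] FG by simp
        also have "Dstar n (Suc h') (Msum G) = (\<lambda>\<theta>. ?c * (real h' - real (type_ell m a)) * F \<theta>)"
          using IH FG Dstar_scale[of n "Suc h'" "?c * (real h' - real (type_ell m a))" G] by simp
        finally show "Msum F \<theta> = ?c * (real (Suc h') - real (type_ell m a)) * F \<theta>"
          by (simp add: algebra_simps)
      qed
      have DD: "Dstar n (Suc h') (Dop n (Suc h') F) = (\<lambda>\<theta>. ?e * F \<theta>)"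
        using IH FG Dstar_scale[of n "Suc h'" ?e G] by simp
      have "Dop n (Suc (Suc h')) (Dstar n (Suc (Suc h')) F)
        = (\<lambda>\<theta>. (?c * (real n - real (Suc h')) + ?e - ?c * (real (Suc h') - real (type_ell m a))) * F \<theta>)"
        using combine[OF supp _ M DD] Suc.prems(2) by simp
      also have "\<dots> = (\<lambda>\<theta>. ?c * (real n + real (type_ell m a) - real k - real (Suc h')) * real (Suc h' - k + 1) * F \<theta>)"
        using kh by (simp add: of_nat_diff algebra_simps)
      finally show ?thesis using supp M by simp
    qed
  }
qed

theorem proposition7p8:
  fixes n m k h :: nat and q :: "'y::finite \<Rightarrow> 'y \<Rightarrow> real"
    and lam :: "nat \<Rightarrow> real" and a :: "nat \<Rightarrow> nat"
    and F :: "(nat \<rightharpoonup> 'y) \<Rightarrow> real"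
  assumes "symmetric_matrix q" and "stochastic_matrix q" and "irreducible_matrix q"
    and "lam 0 = 1" and "inj_on lam {0..m}"
    and "\<forall>\<mu>. is_eigenvalue q \<mu> \<longleftrightarrow> (\<exists>i\<le>m. lam i = \<mu>)"
    and "k \<le> h" and "h \<le> n - 1" and "1 \<le> n"
    and "type_size m a = h + 1" and "type_ell m a \<le> k"
    and "F \<in> P_hbk n q m lam h (type_prime a) k"
  shows "Dop n (h + 1) (Dstar n (h + 1) F)
         = (\<lambda>\<theta>. real (card (UNIV :: 'y set)) * (real n + real (type_ell m a) - real k - real h)
                  * real (h - k + 1) * F \<theta>)"
proof -
  have hn: "h < n" using assms(8,9) by simp
  show ?thesis
    using main_ind[OF assms(1-5) assms(7) hn assms(10,11,12)] by simp
qed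

end
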